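(* Let $\psi,\psi_1,\psi_2,\dots$ be Archimedean generators with pseudo-inverses $\varphi,\varphi_1,\varphi_2,\dots$. Then $(\varphi_n)$ converges pointwise to $\varphi$ on $(0,1]$ if and only if $(\psi_n)$ converges uniformly to $\psi$ on $[0,\infty)$.
   Context: An Archimedean generator is a continuous non-increasing $\psi:[0,\infty)\to[0,1]$ with $\psi(0)=1$, $\lim_{z\to\infty}\psi(z)=0$, strictly decreasing on $[0,\inf\{z\in[0,\infty]:\psi(z)=0\}]$ (with $\inf\emptyset=\infty$), normalized so that $\psi(1)=1/2$. Its pseudo-inverse is $\varphi:[0,1]\to[0,\infty]$, $\varphi(y)=\inf\{z\in[0,\infty]:\psi(z)=y\}$. *)

theory Defs
  imports "HOL-Analysis.Analysis"
begin

text \<open>Generators are modelled as functions real => real; only their values on [0,oo) matter.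
  The point oo of [0,oo] is handled with extended reals, with psi(oo) = lim psi = 0.\<close>

definition zero_point :: "(real \<Rightarrow> real) \<Rightarrow> ereal" where
  "zero_point \<psi> = Inf ({ereal z | z. 0 \<le> z \<and> \<psi> z = 0} \<union> {\<infinity>})"

definition archimedean_generator :: "(real \<Rightarrow> real) \<Rightarrow> bool" where
  "archimedean_generator \<psi> \<longleftrightarrow>
     continuous_on {0..} \<psi> \<and>
     (\<forall>z\<ge>0. 0 \<le> \<psi> z \<and> \<psi> z \<le> 1) \<and>
     (\<forall>x y. 0 \<le> x \<longrightarrow> x \<le> y \<longrightarrow> \<psi> y \<le> \<psi> x) \<and>
     \<psi> 0 = 1 \<and>
     (\<psi> \<longlongrightarrow> 0) at_top \<and>
     (\<forall>x y. 0 \<le> x \<longrightarrow> x < y \<longrightarrow> ereal y \<le> zero_point \<psi> \<longrightarrow> \<psi> y < \<psi> x) \<and>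
     \<psi> 1 = 1/2"

definition pseudo_inverse :: "(real \<Rightarrow> real) \<Rightarrow> real \<Rightarrow> ereal" where
  "pseudo_inverse \<psi> y = Inf ({ereal z | z. 0 \<le> z \<and> \<psi> z = y} \<union> (if y = 0 then {\<infinity>} else {}))"

end

theory Submission
  imports Defs
begin

definition phiR :: "(real \<Rightarrow> real) \<Rightarrow> real \<Rightarrow> real" where
  "phiR g y = Inf {z. 0 \<le> z \<and> g z = y}"

lemma level_ex:
  assumes "archimedean_generator g" "0 < y" "y \<le> 1"
  shows "\<exists>z\<ge>0. g z = y"
proof -
  have c: "continuous_on {0..} g" and t: "(g \<longlongrightarrow> 0) at_top" and g0: "g 0 = 1"
    using assms(1) unfolding archimedean_generator_def by auto
  have "eventually (\<lambda>x. g x < y) at_top"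
    using order_tendstoD(2)[OF t assms(2)] .
  then obtain N where N: "\<And>x. x \<ge> N \<Longrightarrow> g x < y" by (auto simp: eventually_at_top_linorder)
  define b where "b = max N 0"
  have "g b \<le> y" using N[of b] by (simp add: b_def)
  moreover have "continuous_on {0..b} g" using c by (rule continuous_on_subset) auto
  ultimately obtain x where "x \<ge> 0" "x \<le> b" "g x = y"
    using IVT2'[of g b y 0] g0 assms(3) by (auto simp: b_def)
  then show ?thesis by auto
qed

lemma phiR_props:
  assumes "archimedean_generator g" "0 < y" "y \<le> 1"
  shows "0 \<le> phiR g y" "g (phiR g y) = y" "\<And>z. 0 \<le> z \<Longrightarrow> g z = y \<Longrightarrow> phiR g y \<le> z"
proof -
  have c: "continuous_on {0..} g"
    using assms(1) unfolding archimedean_generator_def by auto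
  define S where "S = {z. 0 \<le> z \<and> g z = y}"
  have S': "S = {x \<in> {0..}. g x = y}" by (auto simp: S_def)
  have cl: "closed S" unfolding S' by (rule continuous_closed_preimage_constant[OF c]) auto
  have ne: "S \<noteq> {}" using level_ex[OF assms] by (auto simp: S_def)
  have bd: "bdd_below S" by (rule bdd_belowI[of _ 0]) (auto simp: S_def)
  have "Inf S \<in> S" using closed_contains_Inf[OF ne bd cl] .
  then have "phiR g y \<in> S" by (simp add: phiR_def S_def)
  then show "0 \<le> phiR g y" "g (phiR g y) = y" by (auto simp: S_def)
  show "\<And>z. 0 \<le> z \<Longrightarrow> g z = y \<Longrightarrow> phiR g y \<le> z"
    unfolding phiR_def S_def[symmetric] by (rule cInf_lower[OF _ bd]) (auto simp: S_def)
qed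

lemma pinv_eq:
  assumes "archimedean_generator g" "0 < y" "y \<le> 1"
  shows "pseudo_inverse g y = ereal (phiR g y)"
proof -
  note p = phiR_props[OF assms]
  have "pseudo_inverse g y = Inf {ereal z | z. 0 \<le> z \<and> g z = y}"
    using assms by (simp add: pseudo_inverse_def)
  also have "\<dots> = ereal (phiR g y)"
  proof (rule antisym)
    show "Inf {ereal z | z. 0 \<le> z \<and> g z = y} \<le> ereal (phiR g y)"
      by (rule Inf_lower) (use p in auto)
    show "ereal (phiR g y) \<le> Inf {ereal z | z. 0 \<le> z \<and> g z = y}"
      by (rule Inf_greatest) (use p in auto)
  qed
  finally show ?thesis .
qed

lemma mono_gen:
  assumes "archimedean_generator g" "0 \<le> x" "x \<le> z"
  shows "g z \<le> g x"
  using assms unfolding archimedean_generator_def by blast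

lemma bounds_gen:
  assumes "archimedean_generator g" "0 \<le> x"
  shows "0 \<le> g x" "g x \<le> 1"
  using assms unfolding archimedean_generator_def by blast+

lemma below_phi:
  assumes "archimedean_generator g" "0 < y" "y \<le> 1" "0 \<le> x" "x < phiR g y"
  shows "y < g x"
proof -
  note p = phiR_props[OF assms(1-3)]
  have "g (phiR g y) \<le> g x" using mono_gen[OF assms(1,4)] assms(5) by auto
  moreover have "g x \<noteq> y" using p(3)[OF assms(4)] assms(5) by force
  ultimately show ?thesis using p(2) by auto
qed

lemma ge_phi:
  assumes "archimedean_generator g" "0 < y" "y \<le> 1" "0 \<le> x" "g x \<le> y"
  shows "phiR g y \<le> x"
  using below_phi[OF assms(1-4)] assms(5) by force

lemma above_phi:
  assumes "archimedean_generator g" "0 < y" "y \<le> 1" "phiR g y < x"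
  shows "g x < y"
proof -
  note p = phiR_props[OF assms(1-3)]
  have strict: "\<And>a b. 0 \<le> a \<Longrightarrow> a < b \<Longrightarrow> ereal b \<le> zero_point g \<Longrightarrow> g b < g a"
    using assms(1) unfolding archimedean_generator_def by blast
  show ?thesis
  proof (cases "ereal x \<le> zero_point g")
    case True
    then show ?thesis using strict[OF p(1) assms(4)] p(2) by auto
  next
    case False
    then have "Inf ({ereal z | z. 0 \<le> z \<and> g z = 0} \<union> {\<infinity>}) < ereal x"
      by (simp add: zero_point_def not_le)
    then obtain w where "w \<in> {ereal z | z. 0 \<le> z \<and> g z = 0} \<union> {\<infinity>}" "w < ereal x"
      by (auto simp: Inf_less_iff)
    then obtain z where z: "0 \<le> z" "g z = 0" "z < x" by auto
    have "g x \<le> g z" using mono_gen[OF assms(1) z(1)] z(3) by auto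
    then show ?thesis using z(2) assms(2) by auto
  qed
qed


lemma unif_to_pw:
  assumes A: "archimedean_generator \<psi>" and B: "\<And>n. archimedean_generator (\<Psi> n)"
    and U: "uniform_limit {0..} \<Psi> \<psi> sequentially" and y: "0 < y" "y \<le> 1"
  shows "(\<lambda>n. phiR (\<Psi> n) y) \<longlonglongrightarrow> phiR \<psi> y"
proof (rule tendstoI)
  fix e :: real assume e: "0 < e"
  define z where "z = phiR \<psi> y"
  note pz = phiR_props[OF A y, folded z_def]
  note pn = phiR_props[OF B y]
  have U': "\<And>d. d > 0 \<Longrightarrow> \<forall>\<^sub>F n in sequentially. \<forall>x\<in>{0..}. dist (\<Psi> n x) (\<psi> x) < d"
    using U unfolding uniform_limit_iff by blast
  define a where "a = z + e/2"
  have a0: "0 \<le> a" using pz(1) e by (simp add: a_def)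
  have "\<psi> a < y" using above_phi[OF A y] e by (simp add: a_def z_def)
  then have "\<forall>\<^sub>F n in sequentially. \<forall>x\<in>{0..}. dist (\<Psi> n x) (\<psi> x) < y - \<psi> a"
    using U'[of "y - \<psi> a"] by simp
  then have ev1: "\<forall>\<^sub>F n in sequentially. phiR (\<Psi> n) y \<le> a"
  proof (rule eventually_mono)
    fix n assume "\<forall>x\<in>{0..}. dist (\<Psi> n x) (\<psi> x) < y - \<psi> a"
    then have "\<bar>\<Psi> n a - \<psi> a\<bar> < y - \<psi> a" using a0 by (auto simp: dist_real_def)
    then have "\<Psi> n a \<le> y" by linarith
    then show "phiR (\<Psi> n) y \<le> a" using ge_phi[OF B y a0] by blast
  qed
  have ev2: "\<forall>\<^sub>F n in sequentially. z - e/2 < phiR (\<Psi> n) y"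
  proof (cases "z - e/2 < 0")
    case True
    then show ?thesis using pn(1) by (intro always_eventually) (smt (verit))
  next
    case False
    define b where "b = z - e/2"
    have b0: "0 \<le> b" using False by (simp add: b_def)
    have "y < \<psi> b" using below_phi[OF A y b0] e by (simp add: b_def z_def)
    then have "\<forall>\<^sub>F n in sequentially. \<forall>x\<in>{0..}. dist (\<Psi> n x) (\<psi> x) < \<psi> b - y"
      using U'[of "\<psi> b - y"] by simp
    then show ?thesis
    proof (rule eventually_mono)
      fix n assume "\<forall>x\<in>{0..}. dist (\<Psi> n x) (\<psi> x) < \<psi> b - y"
      then have "\<bar>\<Psi> n b - \<psi> b\<bar> < \<psi> b - y" using b0 by (auto simp: dist_real_def)
      then have "y < \<Psi> n b" by linarith
      moreover have "phiR (\<Psi> n) y \<le> b \<Longrightarrow> \<Psi> n b \<le> y"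
        using mono_gen[OF B pn(1)] pn(2) by metis
      ultimately have "\<not> phiR (\<Psi> n) y \<le> b" by linarith
      then show "z - e/2 < phiR (\<Psi> n) y" by (simp add: b_def)
    qed
  qed
  show "\<forall>\<^sub>F n in sequentially. dist (phiR (\<Psi> n) y) (phiR \<psi> y) < e"
    using ev1 ev2
  proof eventually_elim
    case (elim n)
    then show ?case using e by (auto simp: dist_real_def a_def z_def abs_if)
  qed
qed


lemma pw_to_unif:
  assumes A: "archimedean_generator \<psi>" and B: "\<And>n. archimedean_generator (\<Psi> n)"
    and P: "\<And>y. 0 < y \<Longrightarrow> y \<le> 1 \<Longrightarrow> (\<lambda>n. phiR (\<Psi> n) y) \<longlonglongrightarrow> phiR \<psi> y"
  shows "uniform_limit {0..} \<Psi> \<psi> sequentially"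
  unfolding uniform_limit_iff
proof (intro allI impI)
  fix e :: real assume e: "0 < e"
  obtain N :: nat where N: "2 / e < real N" using reals_Archimedean2 by blast
  have N0: "0 < real N" using N e by (smt (verit) divide_pos_pos)
  have Ne: "2 / real N < e" using N e N0 by (simp add: field_simps)
  define y where "y k = real k / real N" for k :: nat
  define z where "z k = phiR \<psi> (y k)" for k
  have yin: "0 < y k" "y k \<le> 1" if "k \<in> {1..N}" for k
    using that N0 by (auto simp: y_def field_simps)
  have zy: "\<psi> (z k) = y k" "0 \<le> z k" if "k \<in> {1..N}" for k
    using phiR_props[OF A yin[OF that]] by (auto simp: z_def)
  have zdec: "z j < z k" if "k \<in> {1..N}" "j \<in> {1..N}" "k < j" for j k
  proof (rule ccontr)
    assume "\<not> z j < z k"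
    then have "\<psi> (z j) \<le> \<psi> (z k)" using mono_gen[OF A zy(2)[OF that(1)]] by auto
    then have "y j \<le> y k" using zy(1) that by auto
    then have "real j \<le> real k" using N0 by (simp add: y_def divide_le_cancel)
    then show False using that by simp
  qed
  have "\<forall>k\<in>{1..N}. \<forall>\<^sub>F n in sequentially.
     (2 \<le> k \<longrightarrow> z k < phiR (\<Psi> n) (y (k-1))) \<and> (k+1 \<le> N \<longrightarrow> phiR (\<Psi> n) (y (k+1)) < z k)"
  proof
    fix k assume k: "k \<in> {1..N}"
    have e1: "\<forall>\<^sub>F n in sequentially. (2 \<le> k \<longrightarrow> z k < phiR (\<Psi> n) (y (k-1)))"
    proof (cases "2 \<le> k")
      case True
      then have k1: "k - 1 \<in> {1..N}" "k-1 < k" using k by auto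
      have "z k < z (k-1)" using zdec[OF k1(1) k k1(2)] .
      then have "\<forall>\<^sub>F n in sequentially. z k < phiR (\<Psi> n) (y (k-1))"
        using order_tendstoD(1)[OF P[OF yin[OF k1(1)]]] by (simp add: z_def)
      then show ?thesis by (rule eventually_mono) auto
    qed auto
    have e2: "\<forall>\<^sub>F n in sequentially. (k+1 \<le> N \<longrightarrow> phiR (\<Psi> n) (y (k+1)) < z k)"
    proof (cases "k+1 \<le> N")
      case True
      then have k1: "k + 1 \<in> {1..N}" "k < k+1" using k by auto
      have "z (k+1) < z k" using zdec[OF k k1(1) k1(2)] .
      then have "\<forall>\<^sub>F n in sequentially. phiR (\<Psi> n) (y (k+1)) < z k"
        using order_tendstoD(2)[OF P[OF yin[OF k1(1)]]] by (simp add: z_def)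
      then show ?thesis by (rule eventually_mono) auto
    qed auto
    show "\<forall>\<^sub>F n in sequentially.
     (2 \<le> k \<longrightarrow> z k < phiR (\<Psi> n) (y (k-1))) \<and> (k+1 \<le> N \<longrightarrow> phiR (\<Psi> n) (y (k+1)) < z k)"
      using e1 e2 by (rule eventually_conj)
  qed
  then have ev: "\<forall>\<^sub>F n in sequentially. \<forall>k\<in>{1..N}.
     (2 \<le> k \<longrightarrow> z k < phiR (\<Psi> n) (y (k-1))) \<and> (k+1 \<le> N \<longrightarrow> phiR (\<Psi> n) (y (k+1)) < z k)"
    by (rule eventually_ball_finite[rotated]) simp
  show "\<forall>\<^sub>F n in sequentially. \<forall>x\<in>{0..}. dist (\<Psi> n x) (\<psi> x) < e"
    using ev
  proof (rule eventually_mono)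
    fix n assume H: "\<forall>k\<in>{1..N}.
     (2 \<le> k \<longrightarrow> z k < phiR (\<Psi> n) (y (k-1))) \<and> (k+1 \<le> N \<longrightarrow> phiR (\<Psi> n) (y (k+1)) < z k)"
    show "\<forall>x\<in>{0..}. dist (\<Psi> n x) (\<psi> x) < e"
    proof
      fix x :: real assume "x \<in> {0..}"
      then have x0: "0 \<le> x" by simp
      have b: "0 \<le> \<psi> x" "\<psi> x \<le> 1" "0 \<le> \<Psi> n x" "\<Psi> n x \<le> 1"
        using bounds_gen[OF A x0] bounds_gen[OF B x0] by auto
      define t where "t = real N * \<psi> x"
      have t0: "0 \<le> t" using b N0 by (simp add: t_def)
      have upper: "\<Psi> n x \<le> \<psi> x + 2 / real N"
      proof (cases "1 - 2 / real N \<le> \<psi> x")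
        case True then show ?thesis using b by linarith
      next
        case False
        define j where "j = max 1 (nat \<lceil>t\<rceil>)"
        have c1: "t \<le> real (nat \<lceil>t\<rceil>)" "real (nat \<lceil>t\<rceil>) < t + 1"
          using t0 by linarith+
        have jm: "real j = max 1 (real (nat \<lceil>t\<rceil>))" by (simp add: j_def of_nat_max)
        have j1: "t \<le> real j" "real j \<le> t + 1" "1 \<le> j"
          using c1 t0 jm by (simp_all only: j_def max.cobounded1; linarith)+
        have tl: "t < real N - 2" using False N0 by (simp add: t_def field_simps)
        have jN: "j + 1 \<le> N" using j1 tl by linarith
        have jin: "j \<in> {1..N}" using j1 jN by auto
        have "\<psi> x \<le> y j" using j1 N0 by (simp add: y_def t_def field_simps)
        then have "z j \<le> x" using ge_phi[OF A yin[OF jin] x0] by (simp add: z_def)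
        moreover have "phiR (\<Psi> n) (y (j+1)) < z j" using H jin jN by blast
        moreover have j2: "j + 1 \<in> {1..N}" using jN by auto
        note pn = phiR_props[OF B yin[OF j2]]
        ultimately have "\<Psi> n x \<le> y (j+1)" using mono_gen[OF B[of n] pn(1)[of n], of x] pn(2)[of n] by simp
        also have "\<dots> = (real j + 1) / real N" by (simp add: y_def)
        also have "\<dots> \<le> (t + 2) / real N" using j1 N0 by (intro divide_right_mono) auto
        also have "\<dots> = \<psi> x + 2 / real N" using N0 by (simp add: t_def field_simps)
        finally show ?thesis .
      qed
      have lower: "\<psi> x - 2 / real N \<le> \<Psi> n x"
      proof (cases "\<psi> x \<le> 2 / real N")
        case True then show ?thesis using b by linarith
      next
        case False
        define j where "j = nat \<lceil>t\<rceil> - 1"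
        have c1: "t \<le> real (nat \<lceil>t\<rceil>)" "real (nat \<lceil>t\<rceil>) < t + 1"
          using t0 by linarith+
        have t2: "2 < t" using False N0 by (simp add: t_def field_simps)
        have tN: "t \<le> real N" using b N0 by (simp add: t_def)
        have j1: "real j < t" "t \<le> real j + 1" "2 \<le> j" "j \<le> N"
          using c1 t2 tN unfolding j_def by linarith+
        have jin: "j \<in> {1..N}" using j1 by auto
        have "y j < \<psi> x" using j1 N0 by (simp add: y_def t_def field_simps)
        then have "x < z j" using mono_gen[OF A zy(2)[OF jin], of x] zy(1)[OF jin] by force
        moreover have "z j < phiR (\<Psi> n) (y (j-1))" using H jin j1 by blast
        moreover have j2: "j - 1 \<in> {1..N}" using j1 by auto
        note pn = phiR_props[OF B yin[OF j2]]
        ultimately have "y (j-1) \<le> \<Psi> n x" using mono_gen[OF B[of n] x0, of "phiR (\<Psi> n) (y (j-1))"] pn(2)[of n] by simp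
        moreover have "y (j-1) = (real j - 1) / real N" using j1 by (simp add: y_def of_nat_diff)
        moreover have "\<psi> x - 2 / real N = (t - 2) / real N" using N0 by (simp add: t_def field_simps)
        moreover have "(t - 2) / real N \<le> (real j - 1) / real N" using j1 N0 by (intro divide_right_mono) auto
        ultimately show ?thesis by linarith
      qed
      show "dist (\<Psi> n x) (\<psi> x) < e" using upper lower Ne by (simp add: dist_real_def abs_le_iff)
    qed
  qed
qed

theorem lemma4p3:
  fixes \<psi> :: "real \<Rightarrow> real" and \<Psi> :: "nat \<Rightarrow> real \<Rightarrow> real"
  assumes "archimedean_generator \<psi>"
    and "\<And>n. archimedean_generator (\<Psi> n)"
  shows "(\<forall>y\<in>{0<..1}. (\<lambda>n. pseudo_inverse (\<Psi> n) y) \<longlonglongrightarrow> pseudo_inverse \<psi> y)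
         \<longleftrightarrow> uniform_limit {0..} \<Psi> \<psi> sequentially"
proof -
  have eq: "((\<lambda>n. pseudo_inverse (\<Psi> n) y) \<longlonglongrightarrow> pseudo_inverse \<psi> y) \<longleftrightarrow>
            ((\<lambda>n. phiR (\<Psi> n) y) \<longlonglongrightarrow> phiR \<psi> y)" if "y \<in> {0<..1}" for y
    using that pinv_eq[OF assms(1)] pinv_eq[OF assms(2)] by (simp add: lim_ereal)
  show ?thesis
  proof
    assume "\<forall>y\<in>{0<..1}. (\<lambda>n. pseudo_inverse (\<Psi> n) y) \<longlonglongrightarrow> pseudo_inverse \<psi> y"
    then show "uniform_limit {0..} \<Psi> \<psi> sequentially"
      using eq by (intro pw_to_unif[OF assms]) auto
  next
    assume "uniform_limit {0..} \<Psi> \<psi> sequentially"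
    then show "\<forall>y\<in>{0<..1}. (\<lambda>n. pseudo_inverse (\<Psi> n) y) \<longlonglongrightarrow> pseudo_inverse \<psi> y"
      using eq unif_to_pw[OF assms] by auto
  qed
qed

end
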